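(* Let $B$ be a UFD and $A$ a subring of $B$. Then the following are equivalent: (I) $A$ is a retract of $B$ and $A=B^{\phi}$ for some $\phi\in\operatorname{Exp}_A(B)$ with $\phi\neq\mathrm{Id}$; (II) $B=A^{[1]}$, i.e. $B=A[T]$ for some $T\in B$ transcendental over $A$. In particular, if $R$ is a UFD and $A$ is an $R$-subalgebra of the polynomial ring $B=R[X_1,\dots,X_n]$ satisfying (I), then $B=A^{[1]}$.
   Context: A subring $A$ of a ring $B$ is a retract of $B$ if there is an idempotent ring endomorphism $\pi:B\to B$ with $\pi(B)=A$. For a ring $B$ and an indeterminate $U$, an exponential map on $B$ over a subring $C$ is a $C$-algebra homomorphism $\phi_U:B\to B[U]$ such that composing with evaluation at $U=0$ gives the identity on $B$ and $\phi_V\phi_U=\phi_{V+U}$ (with $\phi_V$ extended to $B[U]\to B[V,U]$ by $\phi_V(U)=U$). $\operatorname{Exp}_C(B)$ denotes the set of these; $B^{\phi}=\{b\in B:\phi(b)=b\}$ is the ring of invariants. *)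

theory Defs
  imports "HOL-Computational_Algebra.Polynomial" "HOL-Computational_Algebra.Factorial_Ring"
begin

definition is_subring :: "'b::comm_ring_1 set \<Rightarrow> bool" where
  "is_subring A \<longleftrightarrow> 0 \<in> A \<and> 1 \<in> A \<and>
     (\<forall>x\<in>A. \<forall>y\<in>A. x + y \<in> A \<and> x - y \<in> A \<and> x * y \<in> A)"

definition is_ring_hom :: "('a::comm_ring_1 \<Rightarrow> 'c::comm_ring_1) \<Rightarrow> bool" where
  "is_ring_hom f \<longleftrightarrow> f 0 = 0 \<and> f 1 = 1 \<and>
     (\<forall>x y. f (x + y) = f x + f y \<and> f (x * y) = f x * f y)"

definition is_retract :: "'b::comm_ring_1 set \<Rightarrow> bool" where
  "is_retract A \<longleftrightarrow> (\<exists>\<pi>::'b \<Rightarrow> 'b. is_ring_hom \<pi> \<and> \<pi> \<circ> \<pi> = \<pi> \<and> range \<pi> = A)"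

text \<open>The element
  \<open>\<phi>_V(\<phi>_U(b)) \<in> B[V,U]\<close> is represented in \<open>(B[V])[U]\<close> (type \<open>'b poly poly\<close>, outer
  variable \<open>U\<close>, inner variable \<open>V\<close>) as \<open>map_poly \<phi> (\<phi> b)\<close>; and \<open>\<phi>_{V+U}(b)\<close> is \<open>\<phi>_U(b)\<close>
  with coefficients regarded as constants and \<open>U\<close> substituted by \<open>V + U\<close>.\<close>
definition exp_maps :: "'b::comm_ring_1 set \<Rightarrow> ('b \<Rightarrow> 'b poly) set" where
  "exp_maps C = {\<phi>. is_ring_hom \<phi> \<and> (\<forall>c\<in>C. \<phi> c = [:c:]) \<and>
       (\<forall>b. poly (\<phi> b) 0 = b) \<and>
       (\<forall>b. map_poly \<phi> (\<phi> b) =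
              poly (map_poly (\<lambda>c. [:[:c:]:]) (\<phi> b)) [:[:0, 1:], 1:])}"

definition invariants :: "('b::comm_ring_1 \<Rightarrow> 'b poly) \<Rightarrow> 'b set" where
  "invariants \<phi> = {b. \<phi> b = [:b:]}"

definition polys_over :: "'b::comm_ring_1 set \<Rightarrow> 'b poly set" where
  "polys_over A = {p. \<forall>i. coeff p i \<in> A}"

definition is_poly_ring_in_one_var_over :: "'b::comm_ring_1 set \<Rightarrow> bool" where
  "is_poly_ring_in_one_var_over A \<longleftrightarrow> (\<exists>T::'b.
      (\<forall>b. \<exists>p\<in>polys_over A. b = poly p T) \<and>
      (\<forall>p\<in>polys_over A. poly p T = 0 \<longrightarrow> p = 0))"

end

theory Submission
  imports Defs
begin


lemma hom_basic:
  assumes "is_ring_hom f"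
  shows "f 0 = 0" "f 1 = 1" "f (x + y) = f x + f y" "f (x * y) = f x * f y"
  using assms unfolding is_ring_hom_def by auto

lemma hom_minus:
  assumes "is_ring_hom f" shows "f (- x) = - f x"
proof -
  have "f (- x) + f x = 0" using hom_basic[OF assms] by (metis add.commute add.right_inverse)
  thus ?thesis by (simp add: eq_neg_iff_add_eq_0)
qed

lemma hom_diff:
  assumes "is_ring_hom f" shows "f (x - y) = f x - f y"
  using hom_basic[OF assms] hom_minus[OF assms] by (metis diff_conv_add_uminus)

lemma hom_power:
  assumes "is_ring_hom f" shows "f (x ^ n) = f x ^ n"
  by (induction n) (simp_all add: hom_basic[OF assms])

lemma map_poly_hom_add:
  assumes "is_ring_hom f" shows "map_poly f (p + q) = map_poly f p + map_poly f q"
  by (rule poly_eqI) (simp add: coeff_map_poly hom_basic[OF assms])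

lemma map_poly_hom_pCons:
  assumes "is_ring_hom f" shows "map_poly f (pCons a p) = pCons (f a) (map_poly f p)"
  by (rule map_poly_pCons) (simp add: hom_basic[OF assms])

lemma map_poly_hom_const:
  assumes "is_ring_hom f" shows "map_poly f [:a:] = [:f a:]"
  using map_poly_hom_pCons[OF assms, of a 0] by simp

lemma map_poly_hom_mult:
  assumes "is_ring_hom f" shows "map_poly f (p * q) = map_poly f p * map_poly f q"
proof (induction p)
  case 0 then show ?case by simp
next
  case (pCons a p)
  have "pCons a p * q = smult a q + pCons 0 (p * q)" by simp
  also have "smult a q = [:a:] * q" by simp
  finally have e: "pCons a p * q = [:a:] * q + pCons 0 (p * q)" .
  have "map_poly f ([:a:] * q) = [:f a:] * map_poly f q"
    by (rule poly_eqI) (simp add: coeff_map_poly hom_basic[OF assms])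
  moreover have "map_poly f (pCons 0 (p * q)) = pCons 0 (map_poly f (p*q))"
    using map_poly_hom_pCons[OF assms] hom_basic[OF assms] by simp
  ultimately show ?case
    by (simp add: e map_poly_hom_add[OF assms] pCons.IH map_poly_hom_pCons[OF assms] hom_basic[OF assms])
qed

lemma map_poly_hom_power:
  assumes "is_ring_hom f" shows "map_poly f (p ^ n) = map_poly f p ^ n"
  by (induction n) (simp_all add: map_poly_hom_mult[OF assms] hom_basic[OF assms])

lemma map_poly_hom_pcompose:
  assumes "is_ring_hom f" shows "map_poly f (pcompose p q) = pcompose (map_poly f p) (map_poly f q)"
proof (induction p)
  case 0 then show ?case by simp
next
  case (pCons a p)
  show ?case
    by (simp add: pcompose_pCons map_poly_hom_pCons[OF assms] map_poly_hom_add[OF assms]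
          map_poly_hom_mult[OF assms] map_poly_hom_const[OF assms] pCons.IH)
qed

lemma const_hom: "is_ring_hom (\<lambda>c::'a::comm_ring_1. [:c:])"
  unfolding is_ring_hom_def by (simp add: one_pCons)

lemma one_plus_X_pow:
  fixes d :: nat
  assumes "\<forall>j. 0 < j \<and> j < d \<longrightarrow> of_nat (d choose j) = (0::'a::comm_ring_1)" and "0 < d"
  shows "[:1, 1::'a:] ^ d = 1 + monom 1 d"
proof (rule poly_eqI)
  fix i
  show "coeff ([:1, 1::'a:] ^ d) i = coeff (1 + monom 1 d) i"
  proof (cases "i \<le> d")
    case True
    then show ?thesis using assms coeff_linear_poly_power[OF True, of "1::'a" 1]
      by (cases "i = 0"; cases "i = d") (auto simp: coeff_monom)
  next
    case False
    then have "coeff ([:1, 1::'a:] ^ d) i = 0"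
      by (intro coeff_eq_0) (simp add: degree_linear_power)
    then show ?thesis using False by (auto simp: coeff_monom)
  qed
qed

lemma pow_one_plus_monom:
  "\<exists>g. (1 + monom (1::'a::comm_ring_1) d) ^ q = 1 + monom 1 d * g"
proof (induction q)
  case 0 then show ?case by (intro exI[of _ 0]) simp
next
  case (Suc q)
  then obtain g where g: "(1 + monom (1::'a) d) ^ q = 1 + monom 1 d * g" by blast
  have "(1 + monom (1::'a) d) ^ Suc q = (1 + monom 1 d) * (1 + monom 1 d * g)" by (simp add: g)
  also have "\<dots> = 1 + monom 1 d * (1 + g + monom 1 d * g)" by (simp add: algebra_simps)
  finally show ?case by blast
qed

lemma choose_dvd:
  fixes d e :: nat
  assumes "0 < d"
    and "\<forall>j. 0 < j \<and> j < d \<longrightarrow> of_nat (d choose j) = (0::'a::{comm_ring_1})"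
    and "\<forall>j. 0 < j \<and> j < d \<longrightarrow> of_nat (e choose j) = (0::'a)"
    and nz: "(1::'a) \<noteq> 0"
  shows "d dvd e"
proof (rule ccontr)
  assume nd: "\<not> d dvd e"
  define r where "r = e mod d"
  define q where "q = e div d"
  have r: "0 < r" "r < d" using nd assms(1) by (auto simp: r_def dvd_eq_mod_eq_0)
  have e: "e = d * q + r" by (simp add: r_def q_def)
  obtain g where g: "(1 + monom (1::'a) d) ^ q = 1 + monom 1 d * g" using pow_one_plus_monom by blast
  have "[:1, 1::'a:] ^ e = ([:1, 1:] ^ d) ^ q * [:1,1:] ^ r" by (simp add: e power_add power_mult)
  also have "\<dots> = [:1,1:] ^ r + monom 1 d * (g * [:1,1:] ^ r)"
    by (simp add: one_plus_X_pow[OF assms(2) assms(1)] g algebra_simps)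
  finally have "coeff ([:1, 1::'a:] ^ e) r = coeff ([:1,1:] ^ r) r + coeff (monom 1 d * (g * [:1,1:] ^ r)) r"
    by simp
  also have "\<dots> = 1" using r by (simp add: coeff_monom_mult coeff_linear_poly_power)
  finally have "of_nat (e choose r) = (1::'a)"
    using coeff_linear_poly_power[of r e "1::'a" 1] e by simp
  with assms(3) r nz show False by auto
qed



lemma in_coeffs_coeff: "x \<in> set (coeffs p) \<Longrightarrow> \<exists>i. x = coeff p i"
proof -
  assume x: "x \<in> set (coeffs p)"
  then have p: "p \<noteq> 0" by auto
  from x obtain n where "n < length (coeffs p)" "x = coeffs p ! n" by (metis in_set_conv_nth)
  with p show ?thesis by (metis coeffs_nth length_coeffs_degree less_Suc_eq_le)
qed

lemma comp_coeff:
  fixes p :: "'a::comm_ring_1 poly"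
  shows "coeff (poly (map_poly (\<lambda>c. [:[:c:]:]) p) [:[:0,1:],1:]) i =
     (\<Sum>j\<le>degree p. monom (coeff p j * of_nat (j choose i)) (j - i))"
proof -
  define M where "M = map_poly (\<lambda>c. [:[:c:]:]) p"
  have dM: "degree M = degree p"
  proof (cases "p = 0")
    case True then show ?thesis by (simp add: M_def)
  next
    case False
    then show ?thesis unfolding M_def by (intro map_poly_degree_eq) simp
  qed
  have cM: "coeff M j = [:[:coeff p j:]:]" for j by (simp add: M_def coeff_map_poly)
  have "poly M [:[:0,1:],1:] = (\<Sum>j\<le>degree p. [:[:coeff p j:]:] * [:[:0,1:],1:] ^ j)"
    by (simp add: poly_altdef dM cM)
  then have "coeff (poly M [:[:0,1:],1:]) i = (\<Sum>j\<le>degree p. [:coeff p j:] * coeff ([:[:0,1:],1:] ^ j) i)"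
    by (simp add: coeff_sum)
  also have "\<dots> = (\<Sum>j\<le>degree p. monom (coeff p j * of_nat (j choose i)) (j - i))"
  proof (rule sum.cong[OF refl])
    fix j
    show "[:coeff p j:] * coeff ([:[:0,1:],1:] ^ j) i = monom (coeff p j * of_nat (j choose i)) (j - i)"
    proof (cases "i \<le> j")
      case True
      then show ?thesis
        by (simp add: coeff_linear_poly_power monom_altdef of_nat_poly mult.commute)
    next
      case False
      then have z: "coeff ([:[:0,1:],1:] ^ j) i = 0"
        by (intro coeff_eq_0) (simp add: degree_linear_power)
      have "j choose i = 0" using False by simp
      then show ?thesis by (simp only: z) simp
    qed
  qed
  finally show ?thesis by (simp add: M_def)
qed



locale EXP =
  fixes \<phi> :: "'b::{factorial_semiring,idom} \<Rightarrow> 'b poly"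
  assumes hom: "is_ring_hom \<phi>"
    and ev0: "\<And>b. poly (\<phi> b) 0 = b"
    and comp: "\<And>b. map_poly \<phi> (\<phi> b) = poly (map_poly (\<lambda>c. [:[:c:]:]) (\<phi> b)) [:[:0,1:],1:]"
begin

abbreviation dg where "dg b \<equiv> degree (\<phi> b)"

lemmas phi = hom_basic[OF hom] hom_diff[OF hom] hom_minus[OF hom] hom_power[OF hom]

lemma phi_eq0: "\<phi> b = 0 \<longleftrightarrow> b = 0"
  using ev0[of b] by (auto simp: phi)

lemma Inv_iff: "b \<in> invariants \<phi> \<longleftrightarrow> dg b = 0"
proof
  assume "b \<in> invariants \<phi>" then show "dg b = 0" by (simp add: invariants_def)
next
  assume "dg b = 0"
  then obtain a where a: "\<phi> b = pCons a 0" by (rule degree_eq_zeroE)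
  with ev0[of b] have "a = b" by simp
  with a show "b \<in> invariants \<phi>" by (simp add: invariants_def)
qed

lemma Inv_phi: "b \<in> invariants \<phi> \<Longrightarrow> \<phi> b = [:b:]" by (simp add: invariants_def)

lemma Inv_closed:
  "0 \<in> invariants \<phi>" "1 \<in> invariants \<phi>"
  "a \<in> invariants \<phi> \<Longrightarrow> b \<in> invariants \<phi> \<Longrightarrow> a + b \<in> invariants \<phi>"
  "a \<in> invariants \<phi> \<Longrightarrow> b \<in> invariants \<phi> \<Longrightarrow> a - b \<in> invariants \<phi>"
  "a \<in> invariants \<phi> \<Longrightarrow> b \<in> invariants \<phi> \<Longrightarrow> a * b \<in> invariants \<phi>"
  "a \<in> invariants \<phi> \<Longrightarrow> a ^ n \<in> invariants \<phi>"
  by (auto simp: invariants_def phi one_pCons poly_const_pow)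

lemma dg_mult: "x \<noteq> 0 \<Longrightarrow> y \<noteq> 0 \<Longrightarrow> dg (x * y) = dg x + dg y"
  by (simp add: phi phi_eq0 degree_mult_eq)

lemma fact_closed: "x * y \<in> invariants \<phi> \<Longrightarrow> x * y \<noteq> 0 \<Longrightarrow> x \<in> invariants \<phi>"
  using dg_mult[of x y] by (auto simp: Inv_iff)

lemma coeff_phi_coeff:
  "\<phi> (coeff (\<phi> b) i) = (\<Sum>j\<le>dg b. monom (coeff (\<phi> b) j * of_nat (j choose i)) (j - i))"
proof -
  have "coeff (map_poly \<phi> (\<phi> b)) i = \<phi> (coeff (\<phi> b) i)"
    by (simp add: coeff_map_poly phi)
  then show ?thesis using comp[of b] comp_coeff[of "\<phi> b" i] by simp
qed

lemma dg_coeff: "dg (coeff (\<phi> b) i) \<le> dg b - i"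
  unfolding coeff_phi_coeff
  by (rule degree_sum_le) (auto intro: order.trans[OF degree_monom_le])

lemma top_coeff:
  assumes "i \<le> dg b"
  shows "coeff (\<phi> (coeff (\<phi> b) i)) (dg b - i) = of_nat (dg b choose i) * coeff (\<phi> b) (dg b)"
proof -
  let ?e = "dg b"
  have "coeff (\<phi> (coeff (\<phi> b) i)) (?e - i) =
        (\<Sum>j\<le>?e. (if j - i = ?e - i then coeff (\<phi> b) j * of_nat (j choose i) else 0))"
    unfolding coeff_phi_coeff coeff_sum by simp
  also have "\<dots> = (\<Sum>j\<le>?e. (if j = ?e then coeff (\<phi> b) ?e * of_nat (?e choose i) else 0))"
  proof (rule sum.cong[OF refl])
    fix j assume j: "j \<in> {..?e}"
    show "(if j - i = ?e - i then coeff (\<phi> b) j * of_nat (j choose i) else 0) =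
          (if j = ?e then coeff (\<phi> b) ?e * of_nat (?e choose i) else 0)"
    proof (cases "j = ?e")
      case True then show ?thesis by simp
    next
      case False
      show ?thesis
      proof (cases "i \<le> j")
        case True
        then have "j - i \<noteq> ?e - i" using False assms j by auto
        then show ?thesis using False by simp
      next
        case False2: False
        then show ?thesis using False by (simp add: binomial_eq_0)
      qed
    qed
  qed
  also have "\<dots> = coeff (\<phi> b) ?e * of_nat (?e choose i)" by simp
  finally show ?thesis by (simp add: mult.commute)
qed

lemma lead_Inv: "coeff (\<phi> b) (dg b) \<in> invariants \<phi>"
  using dg_coeff[of b "dg b"] by (simp add: Inv_iff)

lemma coeff_Inv_big: "coeff (\<phi> b) i \<in> invariants \<phi>" if "dg b \<le> i"
  using dg_coeff[of b i] that by (simp add: Inv_iff)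

end



locale EXPR = EXP \<phi> for \<phi> :: "'b::{factorial_semiring,idom} \<Rightarrow> 'b poly" +
  fixes \<pi> :: "'b \<Rightarrow> 'b"
  assumes pihom: "is_ring_hom \<pi>" and piidem: "\<pi> \<circ> \<pi> = \<pi>"
    and pirange: "range \<pi> = invariants \<phi>"
    and nontriv: "\<phi> \<noteq> (\<lambda>b. [:b:])"
begin

lemmas pi = hom_basic[OF pihom] hom_diff[OF pihom]

lemma pi_in: "\<pi> b \<in> invariants \<phi>" using pirange by auto

lemma pi_Inv: "a \<in> invariants \<phi> \<Longrightarrow> \<pi> a = a"
proof -
  assume "a \<in> invariants \<phi>"
  then obtain x where "a = \<pi> x" using pirange by auto
  then show "\<pi> a = a" using piidem by (metis comp_apply)
qed

lemma ex_pos: "\<exists>b. 0 < dg b"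
proof -
  obtain b where "\<phi> b \<noteq> [:b:]" using nontriv by auto
  then have "b \<notin> invariants \<phi>" by (simp add: invariants_def)
  then show ?thesis by (auto simp: Inv_iff)
qed

definition d where "d = (LEAST n. 0 < n \<and> (\<exists>b. dg b = n))"

lemma d_prop: "0 < d" "\<exists>b. dg b = d"
proof -
  obtain b where "0 < dg b" using ex_pos by blast
  then have "0 < d \<and> (\<exists>b. dg b = d)"
    using LeastI[of "\<lambda>n. 0 < n \<and> (\<exists>b. dg b = n)" "dg b"] unfolding d_def by blast
  then show "0 < d" "\<exists>b. dg b = d" by auto
qed

lemma d_min: "0 < dg b \<Longrightarrow> d \<le> dg b"
  unfolding d_def by (rule Least_le) blast

lemma cand_ex: "\<exists>t. dg t = d \<and> \<pi> t = 0"
proof -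
  obtain r where r: "dg r = d" using d_prop by blast
  have "\<phi> (r - \<pi> r) = \<phi> r - [:\<pi> r:]" using pi_in Inv_phi by (simp add: phi)
  moreover have "degree (\<phi> r - [:\<pi> r:]) = d" using r d_prop(1)
  proof -
    have "\<phi> r - [:\<pi> r:] = \<phi> r + [:- \<pi> r:]" by simp
    also have "degree \<dots> = degree (\<phi> r)" using r d_prop(1) by (intro degree_add_eq_left) simp
    finally show ?thesis using r by simp
  qed
  moreover have "\<pi> (r - \<pi> r) = 0" using pi_Inv[OF pi_in] by (simp add: pi)
  ultimately show ?thesis by metis
qed

definition t where "t = arg_min (\<lambda>t. size (prime_factorization t)) (\<lambda>t. dg t = d \<and> \<pi> t = 0)"

lemma t_prop: "dg t = d" "\<pi> t = 0"
  and t_minimal: "dg s = d \<Longrightarrow> \<pi> s = 0 \<Longrightarrow> size (prime_factorization t) \<le> size (prime_factorization s)"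
proof -
  obtain s0 where "dg s0 = d \<and> \<pi> s0 = 0" using cand_ex by blast
  from arg_min_nat_lemma[of "\<lambda>t. dg t = d \<and> \<pi> t = 0", OF this, of "\<lambda>t. size (prime_factorization t)"]
  show "dg t = d" "\<pi> t = 0"
    "dg s = d \<Longrightarrow> \<pi> s = 0 \<Longrightarrow> size (prime_factorization t) \<le> size (prime_factorization s)"
    unfolding t_def by auto
qed

lemma t_nz: "t \<noteq> 0" using t_prop d_prop by (auto simp: phi)

lemma t_not_dvd: "prime p \<Longrightarrow> p \<in> invariants \<phi> \<Longrightarrow> \<not> p dvd t"
proof
  assume p: "prime p" "p \<in> invariants \<phi>" and "p dvd t"
  then obtain s where s: "t = p * s" by (auto elim: dvdE)
  have pnz: "p \<noteq> 0" "s \<noteq> 0" using p t_nz s by auto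
  have "dg s = d" using dg_mult[OF pnz] s t_prop p by (simp add: Inv_iff)
  moreover have "\<pi> s = 0" using t_prop s pnz pi_Inv[OF p(2)] by (simp add: pi)
  ultimately have "size (prime_factorization t) \<le> size (prime_factorization s)" by (rule t_minimal)
  moreover have "prime_factorization t = {#p#} + prime_factorization s"
    using s prime_factorization_mult[OF pnz] prime_factorization_prime[OF p(1)] by simp
  ultimately show False by simp
qed

definition c where "c = coeff (\<phi> t) d"

lemma c_prop: "c \<in> invariants \<phi>" "c \<noteq> 0"
proof -
  show "c \<in> invariants \<phi>" using lead_Inv[of t] t_prop by (simp add: c_def)
  have "\<phi> t \<noteq> 0" using t_nz by (simp add: phi_eq0)
  then show "c \<noteq> 0" using t_prop(1) unfolding c_def by (metis leading_coeff_0_iff)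
qed

lemma choose_zero:
  assumes "0 < dg b" "0 < j" "j < d"
  shows "of_nat (dg b choose j) = (0::'b)"
proof (rule ccontr)
  let ?e = "dg b"
  assume nz: "of_nat (?e choose j) \<noteq> (0::'b)"
  have jle: "j \<le> ?e" using d_min[OF assms(1)] assms by simp
  define i where "i = ?e - j"
  have ie: "i \<le> ?e" "?e - i = j" using jle by (auto simp: i_def)
  have "\<phi> b \<noteq> 0" using assms(1) by auto
  then have "coeff (\<phi> b) ?e \<noteq> 0" by simp
  then have "coeff (\<phi> (coeff (\<phi> b) i)) j \<noteq> 0"
    using top_coeff[OF ie(1)] ie nz by (simp add: binomial_symmetric[OF jle, symmetric] i_def)
  then have "j \<le> dg (coeff (\<phi> b) i)" by (rule le_degree)
  moreover have "dg (coeff (\<phi> b) i) \<le> j" using dg_coeff[of b i] ie by simp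
  ultimately have "dg (coeff (\<phi> b) i) = j" by simp
  then show False using d_min[of "coeff (\<phi> b) i"] assms by simp
qed

lemma d_dvd: "0 < dg b \<Longrightarrow> d dvd dg b"
proof -
  assume b: "0 < dg b"
  have "\<forall>j. 0 < j \<and> j < d \<longrightarrow> of_nat (d choose j) = (0::'b)"
    using choose_zero[of t] t_prop d_prop(1) by auto
  moreover have "\<forall>j. 0 < j \<and> j < d \<longrightarrow> of_nat (dg b choose j) = (0::'b)"
    using choose_zero[OF b] by auto
  ultimately show ?thesis using choose_dvd[where 'a='b, OF d_prop(1)] by auto
qed

end



lemma subring_sum: "is_subring A \<Longrightarrow> (\<And>i. i \<in> S \<Longrightarrow> f i \<in> A) \<Longrightarrow> sum f S \<in> A"
  by (induction S rule: infinite_finite_induct) (auto simp: is_subring_def)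

lemma po_const: "is_subring A \<Longrightarrow> a \<in> A \<Longrightarrow> [:a:] \<in> polys_over A"
  by (auto simp: polys_over_def coeff_pCons is_subring_def split: nat.splits)

lemma po_0: "is_subring A \<Longrightarrow> 0 \<in> polys_over A"
  by (auto simp: polys_over_def is_subring_def)

lemma po_1: "is_subring A \<Longrightarrow> 1 \<in> polys_over A"
  using po_const[of A 1] by (simp add: is_subring_def one_pCons)

lemma po_pCons: "pCons a p \<in> polys_over A \<longleftrightarrow> a \<in> A \<and> p \<in> polys_over A"
  by (auto simp: polys_over_def coeff_pCons split: nat.splits)

lemma po_add: "is_subring A \<Longrightarrow> p \<in> polys_over A \<Longrightarrow> q \<in> polys_over A \<Longrightarrow> p + q \<in> polys_over A"
  by (auto simp: polys_over_def is_subring_def)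

lemma po_diff: "is_subring A \<Longrightarrow> p \<in> polys_over A \<Longrightarrow> q \<in> polys_over A \<Longrightarrow> p - q \<in> polys_over A"
  by (auto simp: polys_over_def is_subring_def)

lemma po_mult: "is_subring A \<Longrightarrow> p \<in> polys_over A \<Longrightarrow> q \<in> polys_over A \<Longrightarrow> p * q \<in> polys_over A"
proof -
  assume A: "is_subring A" "p \<in> polys_over A" "q \<in> polys_over A"
  { fix n
    have "coeff (p * q) n = (\<Sum>i\<le>n. coeff p i * coeff q (n - i))" by (rule coeff_mult)
    also have "\<dots> \<in> A" using A by (intro subring_sum) (auto simp: polys_over_def is_subring_def)
    finally have "coeff (p * q) n \<in> A" . }
  then show ?thesis by (simp add: polys_over_def)
qed

lemma po_smult: "is_subring A \<Longrightarrow> a \<in> A \<Longrightarrow> p \<in> polys_over A \<Longrightarrow> smult a p \<in> polys_over A"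
  by (auto simp: polys_over_def is_subring_def)

lemma po_monom: "is_subring A \<Longrightarrow> a \<in> A \<Longrightarrow> monom a n \<in> polys_over A"
  by (auto simp: polys_over_def is_subring_def)

context EXPR begin

lemma I_subring: "is_subring (invariants \<phi>)"
  unfolding is_subring_def using Inv_closed by auto

lemma deg_lt:
  fixes p :: "'b poly"
  assumes "degree p \<le> e" "coeff p e = 0" "0 < e" shows "degree p < e"
proof (rule ccontr)
  assume "\<not> degree p < e"
  then have "degree p = e" using assms by simp
  then have "p = 0" using assms(2) by (metis leading_coeff_0_iff)
  then show False using \<open>degree p = e\<close> assms(3) by simp
qed

lemma span: "\<exists>a. a \<in> invariants \<phi> \<and> a \<noteq> 0 \<and> (\<exists>p\<in>polys_over (invariants \<phi>). a * b = poly p t)"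
proof (induction "dg b" arbitrary: b rule: less_induct)
  case less
  show ?case
  proof (cases "dg b = 0")
    case True
    then have "b \<in> invariants \<phi>" by (simp add: Inv_iff)
    then show ?thesis using Inv_closed(2) po_const[OF I_subring]
      by (intro exI[of _ 1] conjI bexI[of _ "[:b:]"]) auto
  next
    case False
    let ?e = "dg b"
    obtain m where m: "?e = d * m" using d_dvd False by (auto elim: dvdE)
    define L where "L = coeff (\<phi> b) ?e"
    have L: "L \<in> invariants \<phi>" using lead_Inv by (simp add: L_def)
    define x where "x = c ^ m * b - L * t ^ m"
    have phx: "\<phi> x = [:c ^ m:] * \<phi> b - [:L:] * \<phi> t ^ m"
      using Inv_phi[OF Inv_closed(6)[OF c_prop(1)]] Inv_phi[OF L] by (simp add: x_def phi)
    have tnz: "\<phi> t \<noteq> 0" using t_nz by (simp add: phi_eq0)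
    have dtm: "degree (\<phi> t ^ m) = ?e" using degree_power_eq[OF tnz, of m] t_prop m by (simp add: mult.commute)
    have ctm: "coeff (\<phi> t ^ m) ?e = c ^ m"
      using lead_coeff_power[of "\<phi> t" m] dtm t_prop by (simp add: c_def)
    have d1: "degree ([:c ^ m:] * \<phi> b) \<le> ?e" using degree_mult_le[of "[:c^m:]" "\<phi> b"] by simp
    have d2: "degree ([:L:] * \<phi> t ^ m) \<le> ?e" using degree_mult_le[of "[:L:]" "\<phi> t ^ m"] dtm by simp
    have "degree (\<phi> x) \<le> ?e"
      unfolding phx by (rule degree_diff_le[OF d1 d2])
    moreover have "coeff (\<phi> x) ?e = 0"
      unfolding phx by (simp add: ctm L_def)
    ultimately have "dg x < ?e" using False by (intro deg_lt) auto
    then obtain a' q where a': "a' \<in> invariants \<phi>" "a' \<noteq> 0" "q \<in> polys_over (invariants \<phi>)"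
      "a' * x = poly q t" using less by blast
    have "(a' * c ^ m) * b = poly (q + monom (a' * L) m) t"
      using a'(4) by (simp add: x_def poly_monom algebra_simps)
    moreover have "a' * c ^ m \<in> invariants \<phi>" using Inv_closed(5)[OF a'(1) Inv_closed(6)[OF c_prop(1)]] .
    moreover have "a' * c ^ m \<noteq> 0" using a'(2) c_prop(2) by simp
    moreover have "q + monom (a' * L) m \<in> polys_over (invariants \<phi>)"
      using po_add[OF I_subring a'(3) po_monom[OF I_subring]] Inv_closed(5)[OF a'(1) L] by blast
    ultimately show ?thesis by blast
  qed
qed

lemma cancel:
  assumes p: "prime p" "p \<in> invariants \<phi>"
  shows "g \<in> polys_over (invariants \<phi>) \<Longrightarrow> p dvd poly g t \<Longrightarrow>
         \<exists>g'\<in>polys_over (invariants \<phi>). g = smult p g'"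
proof (induction g)
  case 0
  then show ?case using po_0[OF I_subring] by (intro bexI[of _ 0]) auto
next
  case (pCons a g)
  have a: "a \<in> invariants \<phi>" and g: "g \<in> polys_over (invariants \<phi>)" using pCons.prems(1) by (auto simp: po_pCons)
  obtain y where y: "a + t * poly g t = p * y" using pCons.prems(2) by (auto elim: dvdE)
  have "a = p * \<pi> y"
    using arg_cong[OF y, of \<pi>] pi_Inv[OF a] pi_Inv[OF p(2)] t_prop by (simp add: pi)
  then have "t * poly g t = p * (y - \<pi> y)" using y by (simp add: algebra_simps)
  then have "p dvd t * poly g t" by simp
  then have "p dvd poly g t" using t_not_dvd[OF p] prime_dvd_mult_iff[OF p(1)] by blast
  then obtain g' where g': "g' \<in> polys_over (invariants \<phi>)" "g = smult p g'" using pCons.IH g by blast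
  have "pCons a g = smult p (pCons (\<pi> y) g')" using \<open>a = p * \<pi> y\<close> g' by simp
  moreover have "pCons (\<pi> y) g' \<in> polys_over (invariants \<phi>)" using g' pi_in by (simp add: po_pCons)
  ultimately show ?case by blast
qed

lemma peel:
  shows "a \<in> invariants \<phi> \<Longrightarrow> a \<noteq> 0 \<Longrightarrow> p \<in> polys_over (invariants \<phi>) \<Longrightarrow> a * b = poly p t \<Longrightarrow>
         \<exists>q\<in>polys_over (invariants \<phi>). b = poly q t"
proof (induction "size (prime_factorization a)" arbitrary: a p b rule: less_induct)
  case less
  show ?case
  proof (cases "is_unit a")
    case True
    then obtain x where x: "1 = a * x" by (auto elim: dvdE)
    then have "x \<in> invariants \<phi>" using fact_closed[of x a] Inv_closed(2) by (simp add: mult.commute)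
    moreover have "b = poly (smult x p) t"
    proof -
      have "b = (a * x) * b" using x by simp
      also have "\<dots> = x * (a * b)" by (simp add: ac_simps)
      finally show ?thesis using less.prems(4) by simp
    qed
    ultimately show ?thesis using po_smult[OF I_subring _ less.prems(3)] by blast
  next
    case False
    obtain q where q: "q dvd a" "prime q" using prime_divisor_exists[OF less.prems(2) False] by blast
    then obtain a' where a': "a = q * a'" by (auto elim: dvdE)
    have nz: "q \<noteq> 0" "a' \<noteq> 0" using a' less.prems(2) by auto
    have qI: "q \<in> invariants \<phi>" using fact_closed[of q a'] a' less.prems by simp
    have aI: "a' \<in> invariants \<phi>" using fact_closed[of a' q] a' less.prems by (simp add: mult.commute)
    have "poly p t = q * (a' * b)" using less.prems(4) a' by (simp add: mult.assoc)
    then have "q dvd poly p t" by simp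
    then obtain p' where p': "p' \<in> polys_over (invariants \<phi>)" "p = smult q p'"
      using cancel[OF q(2) qI less.prems(3)] by blast
    have "q * (a' * b) = q * poly p' t" using less.prems(4) a' p' by (simp add: mult.assoc)
    then have "a' * b = poly p' t" using nz by simp
    moreover have "size (prime_factorization a') < size (prime_factorization a)"
      using a' prime_factorization_mult[OF nz] prime_factorization_prime[OF q(2)] by simp
    ultimately show ?thesis using less.hyps aI nz p' by blast
  qed
qed

lemma transc: "p \<in> polys_over (invariants \<phi>) \<Longrightarrow> p \<noteq> 0 \<Longrightarrow> poly p t \<noteq> 0"
proof (induction p)
  case 0 then show ?case by simp
next
  case (pCons a g)
  have a: "a \<in> invariants \<phi>" and g: "g \<in> polys_over (invariants \<phi>)" using pCons.prems(1) by (auto simp: po_pCons)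
  show ?case
  proof (cases "g = 0")
    case True then show ?thesis using pCons.prems by simp
  next
    case False
    then have y: "poly g t \<noteq> 0" using pCons.IH g by blast
    have "\<phi> (poly (pCons a g) t) = [:a:] + \<phi> t * \<phi> (poly g t)" using Inv_phi[OF a] by (simp add: phi)
    moreover have "degree (\<phi> t * \<phi> (poly g t)) > 0"
      using degree_mult_eq[of "\<phi> t" "\<phi> (poly g t)"] t_nz y t_prop d_prop(1) by (simp add: phi_eq0)
    ultimately have "degree (\<phi> (poly (pCons a g) t)) > 0" by (simp add: degree_add_eq_right)
    then show ?thesis by (metis degree_0 less_irrefl phi_eq0)
  qed
qed

lemma result: "is_poly_ring_in_one_var_over (invariants \<phi>)"
  unfolding is_poly_ring_in_one_var_over_def
proof (intro exI[of _ t] conjI allI ballI impI)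
  fix b
  obtain a p where "a \<in> invariants \<phi>" "a \<noteq> 0" "p \<in> polys_over (invariants \<phi>)" "a * b = poly p t"
    using span by blast
  then show "\<exists>p\<in>polys_over (invariants \<phi>). b = poly p t" by (rule peel)
next
  fix p assume "p \<in> polys_over (invariants \<phi>)" "poly p t = 0"
  then show "p = 0" using transc by blast
qed

end



locale POLY =
  fixes A :: "'b::{factorial_semiring,idom} set" and T :: 'b
  assumes sub: "is_subring A"
    and spn: "\<And>b. \<exists>p\<in>polys_over A. b = poly p T"
    and tr: "\<And>p. p \<in> polys_over A \<Longrightarrow> poly p T = 0 \<Longrightarrow> p = 0"
begin

definition rep where "rep b = (THE p. p \<in> polys_over A \<and> b = poly p T)"

lemma uniq: "p \<in> polys_over A \<Longrightarrow> q \<in> polys_over A \<Longrightarrow> poly p T = poly q T \<Longrightarrow> p = q"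
  using tr[OF po_diff[OF sub]] by force

lemma rep_spec: "rep b \<in> polys_over A" "b = poly (rep b) T"
proof -
  have "\<exists>!p. p \<in> polys_over A \<and> b = poly p T" using spn[of b] uniq by blast
  then have "rep b \<in> polys_over A \<and> b = poly (rep b) T" unfolding rep_def by (rule theI')
  then show "rep b \<in> polys_over A" "b = poly (rep b) T" by auto
qed

lemma rep_eq: "p \<in> polys_over A \<Longrightarrow> rep (poly p T) = p"
  using uniq rep_spec by metis

lemma rep_add: "rep (x + y) = rep x + rep y"
proof -
  have "rep (poly (rep x + rep y) T) = rep x + rep y"
    by (rule rep_eq) (intro po_add[OF sub] rep_spec)
  then show ?thesis using rep_spec(2)[of x] rep_spec(2)[of y] by simp
qed

lemma rep_mult: "rep (x * y) = rep x * rep y"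
proof -
  have "rep (poly (rep x * rep y) T) = rep x * rep y"
    by (rule rep_eq) (intro po_mult[OF sub] rep_spec)
  then show ?thesis using rep_spec(2)[of x] rep_spec(2)[of y] by simp
qed

lemma rep_const: "a \<in> A \<Longrightarrow> rep a = [:a:]"
  using rep_eq[OF po_const[OF sub]] by fastforce

lemma A01: "0 \<in> A" "1 \<in> A" using sub by (auto simp: is_subring_def)

lemma rep_0: "rep 0 = 0" using rep_const[OF A01(1)] by simp
lemma rep_1: "rep 1 = 1" using rep_const[OF A01(2)] by (simp add: one_pCons)

lemma rep_T: "rep T = [:0,1:]"
proof -
  have "[:0,1:] \<in> polys_over A" using A01 po_pCons po_const[OF sub] by (simp add: po_pCons)
  from rep_eq[OF this] show ?thesis by simp
qed

definition pr where "pr b = coeff (rep b) 0"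
definition ph where "ph b = pcompose (rep b) [:T, 1:]"

lemma pr_hom: "is_ring_hom pr"
  unfolding is_ring_hom_def pr_def by (simp add: rep_0 rep_1 rep_add rep_mult coeff_mult_0)

lemma pr_in: "pr b \<in> A" using rep_spec(1)[of b] by (simp add: pr_def polys_over_def)

lemma pr_A: "a \<in> A \<Longrightarrow> pr a = a" by (simp add: pr_def rep_const)

lemma retract: "is_retract A"
  unfolding is_retract_def
proof (intro exI[of _ pr] conjI)
  show "is_ring_hom pr" by (rule pr_hom)
  show "pr \<circ> pr = pr" by (rule ext) (simp add: pr_A[OF pr_in])
  show "range pr = A"
  proof (rule set_eqI)
    fix a show "a \<in> range pr \<longleftrightarrow> a \<in> A"
      using pr_in pr_A by (metis rangeE rangeI)
  qed
qed

lemma ph_hom: "is_ring_hom ph"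
  unfolding is_ring_hom_def ph_def by (simp add: rep_0 rep_1 rep_add rep_mult pcompose_add pcompose_mult pcompose_1)

lemma ph_A: "a \<in> A \<Longrightarrow> ph a = [:a:]" by (simp add: ph_def rep_const)

lemma ph_T: "ph T = [:T, 1:]" by (simp add: ph_def rep_T pcompose_pCons)

lemma ph_ev0: "poly (ph b) 0 = b"
  using rep_spec(2)[of b] by (simp add: ph_def poly_pcompose)

lemma map_ph_rep: "map_poly ph (rep b) = map_poly (\<lambda>c. [:c:]) (rep b)"
proof (rule map_poly_cong)
  fix x assume "x \<in> set (coeffs (rep b))"
  then obtain i where "x = coeff (rep b) i" using in_coeffs_coeff by blast
  then have "x \<in> A" using rep_spec(1)[of b] by (simp add: polys_over_def)
  then show "ph x = [:x:]" by (rule ph_A)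
qed

lemma ph_comp: "map_poly ph (ph b) = poly (map_poly (\<lambda>c. [:[:c:]:]) (ph b)) [:[:0,1:],1:]"
proof -
  let ?L = "map_poly (\<lambda>c::'b. [:c:])"
  have L: "is_ring_hom (\<lambda>c::'b. [:c:])" by (rule const_hom)
  have "map_poly ph (ph b) = map_poly ph (pcompose (rep b) [:T,1:])" by (simp only: ph_def)
  also have "\<dots> = pcompose (map_poly ph (rep b)) (map_poly ph [:T,1:])"
    by (rule map_poly_hom_pcompose[OF ph_hom])
  also have "map_poly ph [:T,1:] = [:[:T,1:], 1:]"
    using ph_hom by (simp add: map_poly_hom_pCons map_poly_hom_const ph_T hom_basic one_pCons)
  finally have lhs: "map_poly ph (ph b) = pcompose (?L (rep b)) [:[:T,1:], 1:]" by (simp add: map_ph_rep)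
  have "poly (map_poly (\<lambda>c. [:[:c:]:]) (ph b)) [:[:0,1:],1:] =
        poly (map_poly (\<lambda>x. [:x:]) (?L (ph b))) [:[:0,1:],1:]"
    by (simp add: map_poly_map_poly comp_def)
  also have "\<dots> = pcompose (?L (ph b)) [:[:0,1:],1:]" by (simp add: pcompose_altdef)
  also have "?L (ph b) = pcompose (?L (rep b)) (?L [:T,1:])"
    unfolding ph_def by (rule map_poly_hom_pcompose[OF L])
  also have "?L [:T,1:] = [:[:T:], 1:]"
    using L by (simp add: map_poly_hom_pCons map_poly_hom_const hom_basic one_pCons)
  also have "pcompose (pcompose (?L (rep b)) [:[:T:], 1:]) [:[:0,1:],1:] =
             pcompose (?L (rep b)) (pcompose [:[:T:], 1:] [:[:0,1:],1:])"
    by (simp add: pcompose_assoc)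
  also have "pcompose [:[:T:], 1:] [:[:0,1:],1:] = [:[:T,1:], 1:]"
    by (simp add: pcompose_pCons one_pCons)
  finally show ?thesis using lhs by simp
qed

lemma ph_inv: "invariants ph = A"
proof
  show "A \<subseteq> invariants ph" using ph_A by (auto simp: invariants_def)
next
  show "invariants ph \<subseteq> A"
  proof
    fix b assume "b \<in> invariants ph"
    then have e: "pcompose (rep b) [:T,1:] = [:b:]" by (simp add: invariants_def ph_def)
    have "degree (rep b) = 0" using arg_cong[OF e, of degree] by (simp add: degree_pcompose)
    then have "poly (rep b) T = coeff (rep b) 0" by (simp add: poly_altdef)
    then have "b = coeff (rep b) 0" using rep_spec(2)[of b] by simp
    moreover have "coeff (rep b) 0 \<in> A" using rep_spec(1)[of b] by (simp add: polys_over_def)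
    ultimately show "b \<in> A" by simp
  qed
qed

lemma ph_exp: "ph \<in> exp_maps A"
  unfolding exp_maps_def using ph_hom ph_A ph_ev0 ph_comp by blast

lemma ph_nontriv: "ph \<noteq> (\<lambda>b. [:b:])"
proof
  assume "ph = (\<lambda>b. [:b:])"
  then have "[:T, 1:] = [:T:]" using ph_T by metis
  then show False by simp
qed

end

theorem proposition4p2:
  fixes A :: "'b::{factorial_semiring, idom} set"
  assumes "is_subring A"
  shows "(is_retract A \<and>
            (\<exists>\<phi>\<in>exp_maps A. \<phi> \<noteq> (\<lambda>b. [:b:]) \<and> A = invariants \<phi>))
         \<longleftrightarrow> is_poly_ring_in_one_var_over A"
proof
  assume "is_retract A \<and> (\<exists>\<phi>\<in>exp_maps A. \<phi> \<noteq> (\<lambda>b. [:b:]) \<and> A = invariants \<phi>)"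
  then obtain \<pi> \<phi> where pi: "is_ring_hom \<pi>" "\<pi> \<circ> \<pi> = \<pi>" "range \<pi> = A"
    and ph: "\<phi> \<in> exp_maps A" "\<phi> \<noteq> (\<lambda>b. [:b:])" "A = invariants \<phi>"
    unfolding is_retract_def by blast
  interpret EXPR \<phi> \<pi>
    using pi ph unfolding exp_maps_def by unfold_locales auto
  show "is_poly_ring_in_one_var_over A" using result ph(3) by simp
next
  assume "is_poly_ring_in_one_var_over A"
  then obtain T where T: "\<forall>b. \<exists>p\<in>polys_over A. b = poly p T"
      "\<forall>p\<in>polys_over A. poly p T = 0 \<longrightarrow> p = 0"
    unfolding is_poly_ring_in_one_var_over_def by blast
  interpret POLY A T using assms T by unfold_locales auto
  show "is_retract A \<and> (\<exists>\<phi>\<in>exp_maps A. \<phi> \<noteq> (\<lambda>b. [:b:]) \<and> A = invariants \<phi>)"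
    using retract ph_exp ph_nontriv ph_inv by blast
qed

end
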